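(* For each $n$ let $\mathbf d=(d(1),\dots,d(n))$ be a sequence of non-negative integers with even sum, $M=\sum_i d(i)$, $\Delta=\max_i d(i)$, and suppose there exist sets $S\subseteq[n]$ and a function $\delta=\delta(n)\to0$ such that, with $\gamma=d(S)/M$, $\Delta^2(\gamma^{-1}\log M)^{12}\le\delta\, d(S)$. Then for all sufficiently large $n$, $\mathbf d$ is graphical, i.e. there exists a simple graph on vertex set $[n]$ in which vertex $i$ has degree $d(i)$ for all $i$.
   Context: $d(S)=\sum_{i\in S}d(i)$; $n\to\infty$ (with $M\to\infty$). *)

theory Defs
  imports Complex_Main
begin

definition graphical :: "nat \<Rightarrow> (nat \<Rightarrow> nat) \<Rightarrow> bool" where
  "graphical n d \<longleftrightarrow> (\<exists>E :: nat set set.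
      (\<forall>e\<in>E. e \<subseteq> {1..n} \<and> card e = 2) \<and>
      (\<forall>i\<in>{1..n}. card {e\<in>E. i \<in> e} = d i))"

end

theory Submission
  imports Defs
begin

definition degE :: "nat set set \<Rightarrow> nat \<Rightarrow> nat" where
  "degE E v = card {e\<in>E. v \<in> e}"

definition wfg :: "nat \<Rightarrow> nat set set \<Rightarrow> bool" where
  "wfg n E \<longleftrightarrow> (\<forall>e\<in>E. e \<subseteq> {1..n} \<and> card e = 2)"

lemma wfg_finite: "wfg n E \<Longrightarrow> finite E"
proof -
  assume "wfg n E"
  then have "E \<subseteq> Pow {1..n}" by (auto simp: wfg_def)
  then show ?thesis by (rule finite_subset) simp
qed

lemma deg_insert: "finite E \<Longrightarrow> a \<notin> E \<Longrightarrow> degE (insert a E) w = degE E w + (if w \<in> a then 1 else 0)"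
proof -
  assume f: "finite E" and a: "a \<notin> E"
  show ?thesis
  proof (cases "w \<in> a")
    case True
    then have "{e\<in>insert a E. w \<in> e} = insert a {e\<in>E. w\<in>e}" by auto
    then show ?thesis using True f a by (simp add: degE_def)
  next
    case False
    then have "{e\<in>insert a E. w \<in> e} = {e\<in>E. w\<in>e}" by auto
    then show ?thesis using False by (simp add: degE_def)
  qed
qed

lemma deg_remove: "finite E \<Longrightarrow> c \<in> E \<Longrightarrow> degE (E - {c}) w = degE E w - (if w \<in> c then 1 else 0)"
proof -
  assume f: "finite E" and c: "c \<in> E"
  have "{e\<in>E - {c}. w \<in> e} = {e\<in>E. w\<in>e} - {c}" by auto
  then show ?thesis using f c by (simp add: degE_def card_Diff_singleton_if)
qed

lemma handshake: "wfg n E \<Longrightarrow> (\<Sum>v\<in>{1..n}. degE E v) = 2 * card E"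
proof -
  assume w: "wfg n E"
  have f: "finite E" using w by (rule wfg_finite)
  have "(\<Sum>v\<in>{1..n}. degE E v) = (\<Sum>v\<in>{1..n}. \<Sum>e\<in>E. if v \<in> e then 1 else 0)"
    unfolding degE_def using f by (simp add: sum.inter_filter[symmetric])
  also have "\<dots> = (\<Sum>e\<in>E. \<Sum>v\<in>{1..n}. if v \<in> e then 1 else 0)" by (rule sum.swap)
  also have "\<dots> = (\<Sum>e\<in>E. (2::nat))"
  proof (rule sum.cong)
    fix e assume "e \<in> E"
    then have "e \<subseteq> {1..n}" "card e = 2" using w by (auto simp: wfg_def)
    then have "{v\<in>{1..n}. v \<in> e} = e" by auto
    then show "(\<Sum>v\<in>{1..n}. if v \<in> e then 1 else 0) = (2::nat)"
      using \<open>card e = 2\<close> by (simp add: sum.inter_filter[symmetric])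
  qed simp
  finally show ?thesis by simp
qed

lemma nbr_card: "finite E \<Longrightarrow> card {w. {i,w} \<in> E} \<le> degE E i"
proof -
  assume f: "finite E"
  have "inj_on (\<lambda>w. {i,w}) {w. {i,w} \<in> E}" by (auto simp: inj_on_def doubleton_eq_iff)
  moreover have "(\<lambda>w. {i,w}) ` {w. {i,w} \<in> E} \<subseteq> {e\<in>E. i\<in>e}" by auto
  ultimately show ?thesis unfolding degE_def using f by (intro card_inj_on_le) auto
qed


lemma step:
  fixes d :: "nat \<Rightarrow> nat"
  assumes w: "wfg n E" and le: "\<forall>v\<in>{1..n}. degE E v \<le> d v"
    and D: "\<forall>v\<in>{1..n}. d v \<le> D" and big: "5 * D^2 < (\<Sum>v\<in>{1..n}. d v)"
    and lt: "2 * card E < (\<Sum>v\<in>{1..n}. d v)" and ev: "even (\<Sum>v\<in>{1..n}. d v)"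
  shows "\<exists>E'. wfg n E' \<and> card E' = card E + 1 \<and> (\<forall>v\<in>{1..n}. degE E' v \<le> d v)"
proof -
  define V where "V = {1..n}"
  define M where "M = (\<Sum>v\<in>V. d v)"
  have f: "finite E" using w by (rule wfg_finite)
  define Pos where "Pos = {v\<in>V. degE E v < d v}"
  have R: "(\<Sum>v\<in>V. d v - degE E v) = M - 2 * card E"
    using sum_subtractf_nat[of V "degE E" d] le handshake[OF w] unfolding M_def V_def by simp
  have R2: "M - 2 * card E \<ge> 2"
  proof -
    have "even (M - 2 * card E)" using ev unfolding M_def V_def by simp
    moreover have "M - 2 * card E > 0" using lt unfolding M_def V_def by simp
    ultimately show ?thesis by (metis One_nat_def Suc_1 Suc_leI le_neq_implies_less odd_one)
  qed
  have RP: "(\<Sum>v\<in>V. d v - degE E v) = (\<Sum>v\<in>Pos. d v - degE E v)"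
    unfolding Pos_def V_def by (rule sum.mono_neutral_right) auto
  have Pne: "Pos \<noteq> {}" using R R2 RP by auto
  have PV: "Pos \<subseteq> V" unfolding Pos_def by auto
  have EV: "\<And>e. e \<in> E \<Longrightarrow> e \<subseteq> V \<and> card e = 2" using w unfolding wfg_def V_def by auto
  show ?thesis
  proof (cases "\<exists>i\<in>Pos. \<exists>j\<in>Pos. i \<noteq> j \<and> {i,j} \<notin> E")
    case True
    then obtain i j where ij: "i \<in> Pos" "j \<in> Pos" "i \<noteq> j" "{i,j} \<notin> E" by blast
    define E' where "E' = insert {i,j} E"
    have "wfg n E'" using w ij PV unfolding E'_def wfg_def V_def by auto
    moreover have "card E' = card E + 1" using f ij unfolding E'_def by simp
    moreover have "\<forall>v\<in>{1..n}. degE E' v \<le> d v"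
      using deg_insert[OF f ij(4)] ij le unfolding E'_def Pos_def by fastforce
    ultimately show ?thesis by blast
  next
    case False
    then have adj: "\<And>i j. i \<in> Pos \<Longrightarrow> j \<in> Pos \<Longrightarrow> i \<noteq> j \<Longrightarrow> {i,j} \<in> E" by blast
    obtain i where i: "i \<in> Pos" using Pne by blast
    define N where "N = (\<lambda>x. {w. {x,w} \<in> E})"
    have NV: "\<And>x. N x \<subseteq> V" unfolding N_def using EV by auto
    have Nfin: "\<And>x. finite (N x)" using NV unfolding V_def by (meson finite_atLeastAtMost finite_subset)
    have Ncard: "\<And>x. card (N x) \<le> degE E x" unfolding N_def using nbr_card[OF f] by blast
    have posD: "\<And>x. x \<in> Pos \<Longrightarrow> degE E x + 1 \<le> D" using D unfolding Pos_def V_def by fastforce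
    obtain j where j: "j \<in> Pos" "j = i \<and> degE E i + 2 \<le> d i \<or> j \<noteq> i"
    proof (cases "degE E i + 2 \<le> d i")
      case True then show ?thesis using that i by blast
    next
      case False
      show ?thesis
      proof (rule ccontr)
        assume "\<not> thesis"
        then have "Pos = {i}" using that i by blast
        then have "(\<Sum>v\<in>Pos. d v - degE E v) = d i - degE E i" by simp
        then show False using False R R2 RP by linarith
      qed
    qed
    have Psub: "Pos \<subseteq> insert i (N i)" using adj i unfolding N_def by blast
    have Pcard: "card Pos \<le> D"
    proof -
      have "card Pos \<le> card (insert i (N i))" using Psub Nfin by (intro card_mono) auto
      also have "\<dots> \<le> card (N i) + 1" by (simp add: card_insert_le_m1 Nfin card_insert_if)
      also have "\<dots> \<le> D" using Ncard[of i] posD[OF i] by linarith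
      finally show ?thesis .
    qed
    have Rle: "M - 2 * card E \<le> D * D"
    proof -
      have "(\<Sum>v\<in>Pos. d v - degE E v) \<le> (\<Sum>v\<in>Pos. D)"
      proof (rule sum_mono)
        fix v assume "v \<in> Pos"
        then have "d v \<le> D" using D PV unfolding V_def by blast
        then show "d v - degE E v \<le> D" by linarith
      qed
      also have "\<dots> = card Pos * D" by simp
      also have "\<dots> \<le> D * D" using Pcard by simp
      finally show ?thesis using R RP by simp
    qed
    define A where "A = insert i (N i) \<union> insert j (N j)"
    have AV: "A \<subseteq> V" using NV i j PV unfolding A_def by auto
    have Afin: "finite A" unfolding A_def using Nfin by simp
    have Acard: "card A \<le> 2 * D"
    proof -
      have "card A \<le> card (insert i (N i)) + card (insert j (N j))" unfolding A_def by (rule card_Un_le)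
      also have "\<dots> \<le> (card (N i) + 1) + (card (N j) + 1)"
        by (intro add_mono) (simp_all add: Nfin card_insert_if)
      also have "\<dots> \<le> 2 * D" using Ncard[of i] Ncard[of j] posD[OF i] posD[OF j(1)] by linarith
      finally show ?thesis .
    qed
    define T where "T = {e\<in>E. e \<inter> A \<noteq> {}}"
    have Tcard: "card T \<le> 2 * D * D"
    proof -
      have "T \<subseteq> (\<Union>a\<in>A. {e\<in>E. a \<in> e})" unfolding T_def by auto
      then have "card T \<le> card (\<Union>a\<in>A. {e\<in>E. a \<in> e})" using f Afin by (intro card_mono) auto
      also have "\<dots> \<le> (\<Sum>a\<in>A. card {e\<in>E. a \<in> e})" by (rule card_UN_le[OF Afin])
      also have "\<dots> \<le> (\<Sum>a\<in>A. D)"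
        by (rule sum_mono) (use AV D le in \<open>fastforce simp: V_def degE_def\<close>)
      also have "\<dots> = card A * D" by simp
      also have "\<dots> \<le> 2 * D * D" using Acard by simp
      finally show ?thesis .
    qed
    have b5: "5 * (D*D) < M" using big by (simp add: M_def V_def power2_eq_square)
    have lt': "2 * card E < M" using lt by (simp add: M_def V_def)
    have "card T < card E" using Tcard Rle b5 lt' by linarith
    moreover have Tfin: "finite T" using f by (simp add: T_def)
    ultimately have "\<not> E \<subseteq> T" using card_mono[OF Tfin, of E] by linarith
    then obtain e where e: "e \<in> E" "e \<notin> T" by blast
    then have eA: "e \<inter> A = {}" unfolding T_def by auto
    have "card e = 2" using EV[OF e(1)] by blast
    then obtain u v where uv: "e = {u,v}" "u \<noteq> v" unfolding card_2_iff by blast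
    have uvV: "u \<in> V" "v \<in> V" using EV[OF e(1)] uv by auto
    have uA: "u \<notin> A" "v \<notin> A" using eA uv by auto
    then have nu: "u \<noteq> i" "u \<noteq> j" "v \<noteq> i" "v \<noteq> j" "{i,u} \<notin> E" "{j,v} \<notin> E" "{i,v} \<notin> E" "{j,u} \<notin> E"
      unfolding A_def N_def by auto
    define E0 where "E0 = E - {e}"
    define E1 where "E1 = insert {j,v} E0"
    define E' where "E' = insert {i,u} E1"
    have f0: "finite E0" "finite E1" using f unfolding E0_def E1_def by auto
    have n1: "{j,v} \<notin> E0" using nu unfolding E0_def by auto
    have n2: "{i,u} \<notin> E1" using nu uv unfolding E1_def E0_def by (auto simp: doubleton_eq_iff)
    have iV: "i \<in> V" "j \<in> V" using i j(1) PV by auto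
    have "wfg n E'" unfolding wfg_def
    proof
      fix x assume "x \<in> E'"
      then consider "x = {i,u}" | "x = {j,v}" | "x \<in> E" unfolding E'_def E1_def E0_def by blast
      then show "x \<subseteq> {1..n} \<and> card x = 2"
      proof cases
        case 1 then show ?thesis using iV uvV nu(1) by (simp add: V_def)
      next
        case 2 then show ?thesis using iV uvV nu(4) by (simp add: V_def)
      next
        case 3 then show ?thesis using EV by (simp add: V_def)
      qed
    qed
    moreover have "card E' = card E + 1"
    proof -
      have "card E > 0" using e(1) f card_gt_0_iff by blast
      then show ?thesis using f0 n1 n2 e f unfolding E'_def E1_def E0_def by (simp add: card_Diff_singleton_if)
    qed
      moreover have degs: "\<And>x. degE E' x = degE E x - (if x \<in> e then 1 else 0) + (if x \<in> {j,v} then 1 else 0)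
         + (if x \<in> {i,u} then 1 else 0)"
    proof -
      fix x
      have d1: "degE E' x = degE E1 x + (if x\<in>{i,u} then 1 else 0)" unfolding E'_def by (rule deg_insert[OF f0(2) n2])
      have d2: "degE E1 x = degE E0 x + (if x\<in>{j,v} then 1 else 0)" unfolding E1_def by (rule deg_insert[OF f0(1) n1])
      have d3: "degE E0 x = degE E x - (if x \<in> e then 1 else 0)" unfolding E0_def by (rule deg_remove[OF f e(1)])
      show "degE E' x = degE E x - (if x \<in> e then 1 else 0) + (if x \<in> {j,v} then 1 else 0)
         + (if x \<in> {i,u} then 1 else 0)" unfolding d1 d2 d3 by (rule refl)
    qed
    moreover have "\<forall>x\<in>{1..n}. degE E' x \<le> d x"
    proof
      fix x assume x: "x \<in> {1..n}"
      have "degE E x \<le> d x" using le x by blast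
      moreover have "x \<in> e \<Longrightarrow> degE E x \<ge> 1"
      proof -
        assume "x \<in> e"
        then have "{e\<in>E. x \<in> e} \<noteq> {}" using e(1) by blast
        moreover have "finite {e\<in>E. x \<in> e}" using f by simp
        ultimately show ?thesis unfolding degE_def by (simp add: Suc_le_eq card_gt_0_iff)
      qed
      moreover have "x \<in> Pos \<Longrightarrow> degE E x < d x" unfolding Pos_def by simp
      ultimately show "degE E' x \<le> d x"
        unfolding degs using i j(1) nu uv(2)
        apply (cases "x = u"; cases "x = v"; cases "x = i"; cases "x = j")
        using j(2) by (auto simp: uv(1))
    qed
    ultimately show ?thesis by blast
  qed
qed


lemma graphical_suff:
  fixes d :: "nat \<Rightarrow> nat"
  assumes D: "\<forall>v\<in>{1..n}. d v \<le> D" and big: "5 * D^2 < (\<Sum>v\<in>{1..n}. d v)"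
    and ev: "even (\<Sum>v\<in>{1..n}. d v)"
  shows "graphical n d"
proof -
  define M where "M = (\<Sum>v\<in>{1..n}. d v)"
  have ind: "k \<le> M div 2 \<Longrightarrow> \<exists>E. wfg n E \<and> card E = k \<and> (\<forall>v\<in>{1..n}. degE E v \<le> d v)" for k
  proof (induction k)
    case 0
    show ?case by (rule exI[of _ "{}"]) (simp add: wfg_def degE_def)
  next
    case (Suc k)
    then obtain E where E: "wfg n E" "card E = k" "\<forall>v\<in>{1..n}. degE E v \<le> d v" by auto
    have "2 * card E < M" using Suc.prems E(2) ev unfolding M_def by fastforce
    then show ?case using step[OF E(1) E(3) D big] ev E(2) unfolding M_def by auto
  qed
  obtain E where E: "wfg n E" "card E = M div 2" "\<forall>v\<in>{1..n}. degE E v \<le> d v" using ind by blast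
  have "(\<Sum>v\<in>{1..n}. d v - degE E v) = M - 2 * card E"
    using sum_subtractf_nat[of "{1..n}" "degE E" d] E(3) handshake[OF E(1)] unfolding M_def by simp
  also have "\<dots> = 0" using E(2) ev unfolding M_def by simp
  finally have "\<forall>v\<in>{1..n}. d v - degE E v = 0" by simp
  then have "\<forall>v\<in>{1..n}. degE E v = d v" using E(3) by fastforce
  then show ?thesis using E(1) unfolding graphical_def wfg_def degE_def by blast
qed

theorem proposition2p1:
  fixes d :: "nat \<Rightarrow> nat \<Rightarrow> nat"
    and S :: "nat \<Rightarrow> nat set"
    and \<delta> :: "nat \<Rightarrow> real"
  defines "M \<equiv> (\<lambda>n. \<Sum>i\<in>{1..n}. d n i)"
    and "\<Delta> \<equiv> (\<lambda>n. Max (d n ` {1..n}))"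
    and "dS \<equiv> (\<lambda>n. \<Sum>i\<in>S n. d n i)"
  assumes even_sum: "\<forall>\<^sub>F n in sequentially. even (M n)"
    and M_inf: "filterlim M at_top sequentially"
    and S_sub: "\<forall>\<^sub>F n in sequentially. S n \<subseteq> {1..n}"
    and dS_pos: "\<forall>\<^sub>F n in sequentially. dS n > 0"
    and delta_lim: "\<delta> \<longlonglongrightarrow> 0"
    and cond: "\<forall>\<^sub>F n in sequentially.
       real (\<Delta> n) ^ 2 * ((inverse (real (dS n) / real (M n))) * ln (real (M n))) ^ 12
         \<le> \<delta> n * real (dS n)"
  shows "\<forall>\<^sub>F n in sequentially. graphical n (d n)"
proof -
  have M6: "\<forall>\<^sub>F n in sequentially. M n \<ge> 6" using M_inf by (simp add: filterlim_at_top)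
  have d6: "\<forall>\<^sub>F n in sequentially. \<delta> n < 1/6" using delta_lim by (rule order_tendstoD) simp
  show ?thesis using even_sum S_sub dS_pos cond M6 d6
  proof eventually_elim
    case (elim n)
    have Dle: "\<forall>v\<in>{1..n}. d n v \<le> \<Delta> n" unfolding \<Delta>_def by simp
    have dSM: "dS n \<le> M n" unfolding dS_def M_def using elim(2) by (intro sum_mono2) auto
    define x where "x = inverse (real (dS n) / real (M n)) * ln (real (M n))"
    have Mpos: "real (M n) > 0" "real (dS n) > 0" using elim by auto
    have i1: "inverse (real (dS n) / real (M n)) \<ge> 1" using Mpos dSM by (simp add: field_simps)
    have "exp 1 \<le> real (M n)" using exp_le elim(5) by linarith
    then have l1: "ln (real (M n)) \<ge> 1" using Mpos by (metis ln_exp ln_le_cancel_iff exp_gt_zero)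
    have "x \<ge> 1" unfolding x_def using mult_mono[OF i1 l1] by simp
    then have x12: "x ^ 12 \<ge> 1" by (rule one_le_power)
    have "real (\<Delta> n) ^ 2 \<le> real (\<Delta> n) ^ 2 * x ^ 12" using x12 by (simp add: mult_le_cancel_left1)
    also have "\<dots> \<le> \<delta> n * real (dS n)" using elim(4) unfolding x_def .
    also have "\<dots> \<le> 1/6 * real (dS n)" using elim(6) Mpos by (intro mult_right_mono) auto
    also have "\<dots> \<le> 1/6 * real (M n)" using dSM by simp
    finally have "real (\<Delta> n) ^ 2 \<le> real (M n) / 6" by simp
    then have "real (5 * \<Delta> n ^ 2) < real (M n)" using elim(5) by simp
    then have big: "5 * \<Delta> n ^ 2 < M n" by linarith
    show ?case by (rule graphical_suff[OF Dle]) (use big elim(1) in \<open>simp_all add: M_def\<close>)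
  qed
qed

end
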